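(* Let $r\ge 0$ and consider the $U_q(\mathfrak{sl}_2)$-module $M(\lambda)\otimes V^{\otimes r}$ over $\mathbb{Q}(q,\lambda)$. For $\rho=(b_0,b_1,\dots,b_r)\in\mathbb{N}^{r+1}$ put \[ v_\rho := F^{b_r}\Big(\cdots F^{b_1}\big(F^{b_0}(v_{\lambda,0})\otimes v_{1,0}\big)\cdots\otimes v_{1,0}\Big). \] Then: (1) For $r\ge 2$ and $1\le i\le r-1$, the map $\mathrm{cap}_i:=\mathrm{id}_{M(\lambda)}\otimes\mathrm{id}_V^{\otimes(i-1)}\otimes\cap\otimes\mathrm{id}_V^{\otimes(r-i-1)}:M(\lambda)\otimes V^{\otimes r}\to M(\lambda)\otimes V^{\otimes (r-2)}$ (the cap applied to the $i$-th and $(i+1)$-th tensor factors $V$) satisfies \[ \mathrm{cap}_i\big(v_{(\dots,b_{i-1},b_i,b_{i+1},b_{i+2},\dots)}\big)=-q^{-1}[b_i]_q\,v_{(\dots,b_{i-1}+b_i+b_{i+1}-1,b_{i+2},\dots)} \] (entries not displayed are unchanged). (2) For $1\le i\le r+1$, the map $\mathrm{cup}_i:=\mathrm{id}_{M(\lambda)}\otimes\mathrm{id}_V^{\otimes(i-1)}\otimes\cup\otimes\mathrm{id}_V^{\otimes(r-i+1)}:M(\lambda)\otimes V^{\otimes r}\to M(\lambda)\otimes V^{\otimes (r+2)}$ (inserting two new tensor factors $V$ in positions $i,i+1$) satisfies \[ \mathrm{cup}_i(v_\rho)=q[2]_q\,v_{(\dots,b_{i-1},1,0,b_i,\dots)}-q\,v_{(\dots,b_{i-1}+1,0,0,b_i,\dots)}-q\,v_{(\dots,b_{i-1},0,1,b_i,\dots)}.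 \] (3) For $r\ge1$, the map $\xi\otimes\mathrm{id}_V^{\otimes(r-1)}$ satisfies \[ v_{(b_0,b_1,\dots)}\mapsto\big(\lambda^{-1}q^{b_0}-\lambda q[b_0]_q\big)v_{(0,b_0+b_1,\dots)}+\lambda q^2[b_0]_q\,v_{(1,b_0+b_1-1,\dots)}. \]
   Context: $U_q(\mathfrak{sl}_2)$ is the $\mathbb{Q}(q)$-algebra generated by $K^{\pm1},E,F$ with $KE=q^2EK$, $KF=q^{-2}FK$, $KK^{-1}=1=K^{-1}K$, $EF-FE=\frac{K-K^{-1}}{q-q^{-1}}$, acting on tensor products via $\Delta(K^{\pm1})=K^{\pm1}\otimes K^{\pm1}$, $\Delta(E)=E\otimes 1+K^{-1}\otimes E$, $\Delta(F)=F\otimes K+1\otimes F$. Quantum integers: $[n]_q=\frac{q^n-q^{-n}}{q-q^{-1}}$; for a formal variable $\lambda$ ($=q^\beta$), $[\beta+k]_q=\frac{\lambda q^k-\lambda^{-1}q^{-k}}{q-q^{-1}}$. The universal Verma module $M(\lambda)$ has $\mathbb{Q}(q,\lambda)$-basis $v_{\lambda,i}$ ($i\ge0$) with $Kv_{\lambda,i}=\lambda q^{-2i}v_{\lambda,i}$, $Fv_{\lambda,i}=v_{\lambda,i+1}$, $Ev_{\lambda,i}=[i]_q[\beta-i+1]_qv_{\lambda,i-1}$. $V$ is the $2$-dimensional module with basis $v_{1,0},v_{1,1}$, $Kv_{1,j}=q^{1-2j}v_{1,j}$, $Fv_{1,0}=v_{1,1}$, $Fv_{1,1}=0$, $Ev_{1,1}=v_{1,0}$,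 $Ev_{1,0}=0$. The maps $\cap:V\otimes V\to\mathbb{Q}(q,\lambda)$ and $\cup:\mathbb{Q}(q,\lambda)\to V\otimes V$ are $\cap(v_{1,0}\otimes v_{1,0})=\cap(v_{1,1}\otimes v_{1,1})=0$, $\cap(v_{1,0}\otimes v_{1,1})=1$, $\cap(v_{1,1}\otimes v_{1,0})=-q^{-1}$, and $\cup(1)=-q\,v_{1,0}\otimes v_{1,1}+v_{1,1}\otimes v_{1,0}$. The map $\xi:M(\lambda)\otimes V\to M(\lambda)\otimes V$ is given by $\xi(v_{\lambda,k}\otimes v_{1,0})=\lambda^{-1}q^{2k}v_{\lambda,k}\otimes v_{1,0}-q(q-q^{-1})[k]_q[\beta-k+1]_qv_{\lambda,k-1}\otimes v_{1,1}$ and $\xi(v_{\lambda,k}\otimes v_{1,1})=(\lambda^{-1}+\lambda q^2-\lambda^{-1}q^{2(k+1)})v_{\lambda,k}\otimes v_{1,1}-\lambda^{-1}q^{2(k+1)}(q-q^{-1})v_{\lambda,k+1}\otimes v_{1,0}$. In the formulas, when $i=1$ the entry $b_{i-1}$ is $b_0$; terms with coefficient $[0]_q=0$ are zero. *)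

theory Defs
  imports "HOL-Computational_Algebra.Polynomial" "HOL-Computational_Algebra.Fraction_Field"
begin

text \<open>The ground field Q(q,lambda): rational functions in lambda over rational functions in q.\<close>
type_synonym K = "rat poly fract poly fract"

definition q :: K where "q = Fract [:Fract [:0, 1:] 1:] 1"
definition lam :: K where "lam = Fract [:0, 1:] 1"   \<comment> \<open>lambda = q^beta\<close>

definition qint :: "int \<Rightarrow> K" where
  "qint n = (q powi n - q powi (- n)) / (q - inverse q)"
definition qbeta :: "int \<Rightarrow> K" where
  "qbeta k = (lam * q powi k - inverse lam * q powi (- k)) / (q - inverse q)"

text \<open>The basis vector (k, [j1,...,jr]) stands for v_{lambda,k} (x) v_{1,j1} (x) ... (x) v_{1,jr}
  of M(lambda) (x) V^{(x) r}. Vectors are (finitely supported) coefficient functions.\<close>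
type_synonym basis = "nat \<times> nat list"
type_synonym vec = "basis \<Rightarrow> K"
type_synonym vvec = "nat \<Rightarrow> K"   \<comment> \<open>vectors of V in the basis v_{1,0}, v_{1,1}\<close>

definition bvec :: "basis \<Rightarrow> vec" where "bvec b = (\<lambda>c. if c = b then 1 else 0)"
definition vsc :: "K \<Rightarrow> vec \<Rightarrow> vec" where "vsc a v = (\<lambda>c. a * v c)"
definition vadd :: "vec \<Rightarrow> vec \<Rightarrow> vec" where "vadd u w = (\<lambda>c. u c + w c)"

definition lin :: "(basis \<Rightarrow> vec) \<Rightarrow> vec \<Rightarrow> vec" where
  "lin f v = (\<lambda>c. \<Sum>b\<in>{b. v b \<noteq> 0}. v b * f b c)"

definition eV :: "nat \<Rightarrow> vvec" where "eV j = (\<lambda>j'. if j' = j then 1 else 0)"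
definition KV :: "nat \<Rightarrow> vvec" where "KV j = (\<lambda>j'. q powi (1 - 2 * int j) * eV j j')"
definition FV :: "nat \<Rightarrow> vvec" where "FV j = (if j = 0 then eV 1 else (\<lambda>_. 0))"

definition tens :: "vec \<Rightarrow> vvec \<Rightarrow> vec" where
  "tens u w = (\<lambda>(k, js). if js = [] then 0 else u (k, butlast js) * w (last js))"

text \<open>Action of F on a basis vector, via Delta(F) = F (x) K + 1 (x) F, recursing on the last
  tensor factor. The list argument is the REVERSED list of V-indices.\<close>
fun Fb_rev :: "nat \<Rightarrow> nat list \<Rightarrow> vec" where
  "Fb_rev k [] = bvec (Suc k, [])"
| "Fb_rev k (j # rjs) = vadd (tens (Fb_rev k rjs) (KV j)) (tens (bvec (k, rev rjs)) (FV j))"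

definition Fact :: "vec \<Rightarrow> vec" where
  "Fact = lin (\<lambda>(k, js). Fb_rev k (rev js))"

definition vrho :: "nat list \<Rightarrow> vec" where
  "vrho bs = foldl (\<lambda>x b. (Fact ^^ b) (tens x (eV 0))) ((Fact ^^ hd bs) (bvec (0, []))) (tl bs)"

definition capV :: "nat \<Rightarrow> nat \<Rightarrow> K" where
  "capV a b = (if a = 0 \<and> b = 1 then 1 else if a = 1 \<and> b = 0 then - inverse q else 0)"

text \<open>cap on the i-th and (i+1)-th V factors (positions counted from 1).\<close>
definition capi :: "nat \<Rightarrow> vec \<Rightarrow> vec" where
  "capi i = lin (\<lambda>(k, js). vsc (capV (js ! (i - 1)) (js ! i)) (bvec (k, take (i - 1) js @ drop (i + 1) js)))"

definition cupi :: "nat \<Rightarrow> vec \<Rightarrow> vec" where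
  "cupi i = lin (\<lambda>(k, js). vadd (vsc (- q) (bvec (k, take (i - 1) js @ [0, 1] @ drop (i - 1) js)))
                                 (bvec (k, take (i - 1) js @ [1, 0] @ drop (i - 1) js)))"

definition xiop :: "vec \<Rightarrow> vec" where
  "xiop = lin (\<lambda>(k, js). case js of [] \<Rightarrow> (\<lambda>_. 0)
     | j # rest \<Rightarrow>
       (if j = 0 then
          vadd (vsc (inverse lam * q ^ (2 * k)) (bvec (k, 0 # rest)))
               (vsc (- q * (q - inverse q) * qint (int k) * qbeta (1 - int k)) (bvec (k - 1, 1 # rest)))
        else
          vadd (vsc (inverse lam + lam * q ^ 2 - inverse lam * q ^ (2 * (k + 1))) (bvec (k, 1 # rest)))
               (vsc (- inverse lam * q ^ (2 * (k + 1)) * (q - inverse q)) (bvec (k + 1, 0 # rest)))))"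

end

theory Submission
  imports Defs
begin

lemma Fract1_eq: "(Fract (a::'a::idom) 1 = Fract b 1) = (a = b)"
  by (simp add: eq_fract)

lemma q_nz: "q \<noteq> 0"
  unfolding q_def by (simp add: Zero_fract_def eq_fract)

lemma lam_nz: "lam \<noteq> 0"
  unfolding lam_def Zero_fract_def by (subst eq_fract) auto

lemma qq_ne1: "q * q \<noteq> 1"
proof
  assume "q * q = 1"
  hence "[:Fract [:0, 1:] 1 * Fract [:0, 1:] 1:] = (1::rat poly fract poly)"
    unfolding q_def by (simp add: One_fract_def eq_fract)
  hence "Fract ([:0, 1:] * [:0, 1:]) 1 = (1::rat poly fract)"
    by (simp add: one_pCons)
  hence "[:0, 1:] * [:0, 1:] = (1::rat poly)"
    by (simp add: One_fract_def eq_fract)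
  thus False
    by (metis (no_types) coeff_pCons_0 mult_pCons_left one_poly_eq_simps(1) pCons_0_0 pCons_eq_iff smult_0_left add_0 zero_neq_one)
qed

definition supp :: "vec \<Rightarrow> basis set" where "supp v = {b. v b \<noteq> 0}"
definition fs :: "vec \<Rightarrow> bool" where "fs v = finite (supp v)"
definition zv :: vec where "zv = (\<lambda>_. 0)"
definition T :: "vec \<Rightarrow> nat \<Rightarrow> vec" where "T u j = tens u (eV j)"
definition hom :: "nat \<Rightarrow> vec \<Rightarrow> bool" where
  "hom n v = (\<forall>k js. v (k, js) \<noteq> 0 \<longrightarrow> length js = n \<and> set js \<subseteq> {0, 1})"

lemma lin_superset:
  assumes "finite S" "supp v \<subseteq> S"
  shows "lin f v c = (\<Sum>b\<in>S. v b * f b c)"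
  unfolding lin_def
  apply (rule sum.mono_neutral_left)
  using assms by (auto simp: supp_def)

lemma supp_bvec: "supp (bvec b) = {b}"
  by (auto simp: supp_def bvec_def)

lemma lin_bvec: "lin f (bvec b) = f b"
  by (rule ext) (simp add: lin_def bvec_def)

lemma fs_bvec[simp]: "fs (bvec b)" by (simp add: fs_def supp_bvec)
lemma fs_zv[simp]: "fs zv" by (simp add: fs_def supp_def zv_def)

lemma supp_vadd: "supp (vadd u w) \<subseteq> supp u \<union> supp w"
  by (auto simp: supp_def vadd_def)
lemma fs_vadd[simp]: "fs u \<Longrightarrow> fs w \<Longrightarrow> fs (vadd u w)"
  unfolding fs_def using supp_vadd by (meson finite_UnI finite_subset)
lemma supp_vsc: "supp (vsc a u) \<subseteq> supp u"
  by (auto simp: supp_def vsc_def)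
lemma fs_vsc[simp]: "fs u \<Longrightarrow> fs (vsc a u)"
  unfolding fs_def using supp_vsc by (meson finite_subset)

lemma lin_add:
  assumes "fs u" "fs w"
  shows "lin f (vadd u w) = vadd (lin f u) (lin f w)"
proof (rule ext)
  fix c
  let ?S = "supp u \<union> supp w"
  have fin: "finite ?S" using assms by (simp add: fs_def)
  have "lin f (vadd u w) c = (\<Sum>b\<in>?S. vadd u w b * f b c)"
    by (rule lin_superset[OF fin supp_vadd])
  also have "\<dots> = (\<Sum>b\<in>?S. u b * f b c) + (\<Sum>b\<in>?S. w b * f b c)"
    by (simp add: vadd_def distrib_right sum.distrib)
  also have "\<dots> = lin f u c + lin f w c"
    by (subst (1 2) lin_superset[OF fin]) auto
  finally show "lin f (vadd u w) c = vadd (lin f u) (lin f w) c" by (simp add: vadd_def)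
qed

lemma lin_sc: "lin f (vsc a u) = vsc a (lin f u)"
proof (cases "a = 0")
  case True then show ?thesis by (simp add: lin_def vsc_def)
next
  case False
  then have "{b. vsc a u b \<noteq> 0} = {b. u b \<noteq> 0}" by (auto simp: vsc_def)
  then show ?thesis
    by (simp add: lin_def vsc_def sum_distrib_left mult.assoc)
qed

lemma lin_zv: "lin f zv = zv"
  by (simp add: lin_def zv_def)

lemma lin_id: "fs u \<Longrightarrow> lin bvec u = u"
proof (rule ext)
  fix c assume "fs u"
  show "lin bvec u c = u c"
  proof (cases "u c = 0")
    case True
    then show ?thesis by (auto simp: lin_def bvec_def intro!: sum.neutral)
  next
    case False
    have "lin bvec u c = (\<Sum>b\<in>{b. u b \<noteq> 0}. if b = c then u b else 0)"
      unfolding lin_def by (rule sum.cong) (auto simp: bvec_def)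
    also have "\<dots> = u c" using False \<open>fs u\<close> by (simp add: fs_def supp_def)
    finally show ?thesis .
  qed
qed

lemma lin_cong: "(\<And>b. u b \<noteq> 0 \<Longrightarrow> f b = g b) \<Longrightarrow> lin f u = lin g u"
  unfolding lin_def by (intro ext sum.cong) auto

lemma lin_fadd: "lin (\<lambda>b. vadd (f b) (g b)) u = vadd (lin f u) (lin g u)"
  by (simp add: lin_def vadd_def distrib_left sum.distrib)

lemma lin_fsc: "lin (\<lambda>b. vsc a (f b)) u = vsc a (lin f u)"
  by (simp add: lin_def vsc_def sum_distrib_left algebra_simps)

lemma lin_fzv: "lin (\<lambda>b. zv) u = zv"
  by (simp add: lin_def zv_def)

lemma lin_fT: "lin (\<lambda>b. T (f b) j) u = T (lin f u) j"
  by (rule ext) (auto simp: lin_def T_def tens_def sum_distrib_left mult_ac split: prod.split)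

lemma T_bvec: "T (bvec (k, js)) j = bvec (k, js @ [j])"
proof (rule ext)
  fix c :: basis
  obtain k' js' where c: "c = (k', js')" by (cases c)
  show "T (bvec (k, js)) j c = bvec (k, js @ [j]) c"
    unfolding c T_def tens_def bvec_def eV_def
    by (cases js' rule: rev_cases) auto
qed

lemma T_vadd: "T (vadd u w) j = vadd (T u j) (T w j)"
  by (rule ext) (simp add: T_def tens_def vadd_def algebra_simps split: prod.split)
lemma T_vsc: "T (vsc a u) j = vsc a (T u j)"
  by (rule ext) (simp add: T_def tens_def vsc_def algebra_simps split: prod.split)
lemma T_zv: "T zv j = zv"
  by (rule ext) (simp add: T_def tens_def zv_def split: prod.split)

definition app :: "nat \<Rightarrow> basis \<Rightarrow> basis" where "app j b = (fst b, snd b @ [j])"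

lemma inj_app: "inj (app j)"
  by (rule injI) (auto simp: app_def prod_eq_iff)

lemma supp_T: "supp (T u j) = app j ` supp u"
proof (intro set_eqI iffI)
  fix c assume "c \<in> supp (T u j)"
  then obtain k js where c: "c = (k, js)" "js \<noteq> []" "u (k, butlast js) \<noteq> 0" "last js = j"
    by (cases c) (auto simp: supp_def T_def tens_def eV_def split: if_splits)
  then have "c = app j (k, butlast js)" by (metis app_def append_butlast_last_id fst_conv snd_conv)
  then show "c \<in> app j ` supp u" using c by (auto simp: supp_def)
next
  fix c assume "c \<in> app j ` supp u"
  then show "c \<in> supp (T u j)"
    by (auto simp: supp_def T_def tens_def eV_def app_def)
qed

lemma fs_T[simp]: "fs u \<Longrightarrow> fs (T u j)"
  by (simp add: fs_def supp_T)

lemma T_app: "T u j (app j b) = u b"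
  by (cases b) (simp add: T_def tens_def eV_def app_def)

lemma lin_T: "lin f (T u j) = lin (\<lambda>b. f (app j b)) u"
proof (rule ext)
  fix c
  have "lin f (T u j) c = (\<Sum>b\<in>app j ` supp u. T u j b * f b c)"
    unfolding lin_def supp_T[symmetric] by (simp add: supp_def)
  also have "\<dots> = (\<Sum>b\<in>supp u. T u j (app j b) * f (app j b) c)"
    by (subst sum.reindex) (auto intro: inj_on_subset[OF inj_app])
  also have "\<dots> = lin (\<lambda>b. f (app j b)) u c"
    by (simp add: lin_def supp_def T_app)
  finally show "lin f (T u j) c = lin (\<lambda>b. f (app j b)) u c" .
qed

lemma supp_lin: "supp (lin g u) \<subseteq> (\<Union>b\<in>supp u. supp (g b))"
proof
  fix c assume "c \<in> supp (lin g u)"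
  then have "(\<Sum>b\<in>supp u. u b * g b c) \<noteq> 0" by (simp add: supp_def lin_def)
  then obtain b where b: "b \<in> supp u" "u b * g b c \<noteq> 0" by (meson sum.neutral)
  then have "c \<in> supp (g b)" by (simp add: supp_def)
  with b(1) show "c \<in> (\<Union>b\<in>supp u. supp (g b))" by (rule UN_I)
qed

lemma fs_lin: "fs u \<Longrightarrow> (\<And>b. fs (g b)) \<Longrightarrow> fs (lin g u)"
  unfolding fs_def using supp_lin by (meson finite_UN_I finite_subset)

lemma lin_lin:
  assumes "fs u" "\<And>b. fs (g b)"
  shows "lin f (lin g u) = lin (\<lambda>b. lin f (g b)) u"
proof (rule ext)
  fix c
  let ?S = "\<Union>b\<in>supp u. supp (g b)"
  have fin: "finite ?S" using assms by (simp add: fs_def)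
  have "lin f (lin g u) c = (\<Sum>b'\<in>?S. lin g u b' * f b' c)"
    by (rule lin_superset[OF fin supp_lin])
  also have "\<dots> = (\<Sum>b'\<in>?S. (\<Sum>b\<in>supp u. u b * g b b') * f b' c)"
    by (simp add: lin_def supp_def)
  also have "\<dots> = (\<Sum>b\<in>supp u. u b * (\<Sum>b'\<in>?S. g b b' * f b' c))"
    by (simp add: sum_distrib_right sum_distrib_left sum.swap[of _ ?S] mult.assoc)
  also have "\<dots> = (\<Sum>b\<in>supp u. u b * lin f (g b) c)"
    by (intro sum.cong refl arg_cong2[where f="(*)"] lin_superset[symmetric] fin) auto
  also have "\<dots> = lin (\<lambda>b. lin f (g b)) u c" by (simp add: lin_def supp_def)
  finally show "lin f (lin g u) c = lin (\<lambda>b. lin f (g b)) u c" .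
qed

lemma hom_lin: "(\<And>b. u b \<noteq> 0 \<Longrightarrow> hom n (g b)) \<Longrightarrow> hom n (lin g u)"
  unfolding hom_def
proof (intro allI impI)
  fix k js assume H: "\<And>b. u b \<noteq> 0 \<Longrightarrow> \<forall>k js. g b (k, js) \<noteq> 0 \<longrightarrow> length js = n \<and> set js \<subseteq> {0, 1}"
    and ne: "lin g u (k, js) \<noteq> 0"
  then have "(k, js) \<in> supp (lin g u)" by (simp add: supp_def)
  then obtain b where "u b \<noteq> 0" "g b (k, js) \<noteq> 0" using supp_lin by (fastforce simp: supp_def)
  then show "length js = n \<and> set js \<subseteq> {0, 1}" using H by blast
qed

lemma hom_bvec: "length js = n \<Longrightarrow> set js \<subseteq> {0, 1} \<Longrightarrow> hom n (bvec (k, js))"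
  by (simp add: hom_def bvec_def)
lemma hom_zv[simp]: "hom n zv" by (simp add: hom_def zv_def)
lemma hom_vadd: "hom n u \<Longrightarrow> hom n w \<Longrightarrow> hom n (vadd u w)"
  unfolding hom_def vadd_def by (metis add_0)
lemma hom_vsc: "hom n u \<Longrightarrow> hom n (vsc a u)"
  unfolding hom_def vsc_def by (metis mult_zero_right)
lemma hom_T: "hom n u \<Longrightarrow> j \<le> 1 \<Longrightarrow> hom (Suc n) (T u j)"
  unfolding hom_def T_def tens_def eV_def
  apply (intro allI impI)
  subgoal for k js by (cases js rule: rev_cases) (auto split: if_splits)
  done

lemma tens_KV: "tens u (KV j) = vsc (q powi (1 - 2 * int j)) (T u j)"
  by (rule ext) (simp add: tens_def KV_def T_def vsc_def eV_def split: prod.split)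
lemma tens_FV: "tens u (FV j) = (if j = 0 then T u 1 else zv)"
  by (rule ext) (simp add: tens_def FV_def T_def zv_def split: prod.split)

definition Fbb :: "basis \<Rightarrow> vec" where "Fbb = (\<lambda>(k, js). Fb_rev k (rev js))"

lemma Fact_lin: "Fact = lin Fbb" by (simp add: Fact_def Fbb_def)

lemma Fb_Cons: "Fb_rev k (j # rjs) = vadd (vsc (q powi (1 - 2 * int j)) (T (Fb_rev k rjs) j))
      (if j = 0 then T (bvec (k, rev rjs)) 1 else zv)"
  by (simp add: tens_KV tens_FV)

declare Fb_rev.simps(2)[simp del]

lemma fs_Fb[simp]: "fs (Fb_rev k rjs)"
  by (induction rjs) (auto simp: Fb_Cons)

lemma hom_Fb: "set rjs \<subseteq> {0, 1} \<Longrightarrow> hom (length rjs) (Fb_rev k rjs)"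
proof (induction rjs)
  case Nil then show ?case by (simp add: hom_bvec)
next
  case (Cons j rjs)
  then have j: "j \<le> 1" by auto
  show ?case using Cons j
    by (auto simp: Fb_Cons intro!: hom_vadd hom_vsc hom_T hom_bvec)
qed

lemma fs_Fbb[simp]: "fs (Fbb b)" by (simp add: Fbb_def split: prod.split)

lemma fs_Fact[simp]: "fs u \<Longrightarrow> fs (Fact u)"
  unfolding Fact_lin by (rule fs_lin) auto

lemma hom_Fact: "hom n u \<Longrightarrow> hom n (Fact u)"
  unfolding Fact_lin
proof (rule hom_lin)
  fix b assume "hom n u" "u b \<noteq> 0"
  then show "hom n (Fbb b)" unfolding Fbb_def hom_def
    using hom_Fb[of "rev (snd b)" "fst b"] by (cases b) (auto simp: hom_def)
qed

lemma Fact_bvec: "Fact (bvec (k, js)) = Fb_rev k (rev js)"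
  by (simp add: Fact_lin lin_bvec Fbb_def)

lemma Fact_add: "fs u \<Longrightarrow> fs w \<Longrightarrow> Fact (vadd u w) = vadd (Fact u) (Fact w)"
  unfolding Fact_lin by (rule lin_add)
lemma Fact_sc: "Fact (vsc a u) = vsc a (Fact u)"
  unfolding Fact_lin by (rule lin_sc)
lemma Fact_zv: "Fact zv = zv"
  unfolding Fact_lin by (rule lin_zv)

lemma FT:
  assumes "fs u"
  shows "Fact (T u j) = vadd (vsc (q powi (1 - 2 * int j)) (T (Fact u) j)) (if j = 0 then T u 1 else zv)"
proof -
  have "Fact (T u j) = lin (\<lambda>b. Fbb (app j b)) u" unfolding Fact_lin by (rule lin_T)
  also have "\<dots> = lin (\<lambda>b. vadd (vsc (q powi (1 - 2 * int j)) (T (Fbb b) j))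
                    (if j = 0 then T (bvec b) 1 else zv)) u"
    by (rule lin_cong) (auto simp: Fbb_def app_def Fb_Cons split: prod.split)
  also have "\<dots> = vadd (vsc (q powi (1 - 2 * int j)) (T (Fact u) j)) (if j = 0 then T u 1 else zv)"
    by (cases "j = 0") (simp_all add: lin_fadd lin_fsc lin_fT lin_fzv lin_id assms Fact_lin)
  finally show ?thesis .
qed

lemma vadd_zv[simp]: "vadd u zv = u" by (simp add: vadd_def zv_def)

lemma F0: "fs u \<Longrightarrow> Fact (T u 0) = vadd (vsc q (T (Fact u) 0)) (T u 1)"
  by (simp add: FT)
lemma F1: "fs u \<Longrightarrow> Fact (T u 1) = vsc (inverse q) (T (Fact u) 1)"
  by (simp add: FT power_int_minus)

lemma fs_Fpow[simp]: "fs u \<Longrightarrow> fs ((Fact ^^ n) u)"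
  by (induction n) auto
lemma hom_Fpow: "hom m u \<Longrightarrow> hom m ((Fact ^^ n) u)"
  by (induction n) (auto intro: hom_Fact)
lemma Fpow_add: "fs u \<Longrightarrow> fs w \<Longrightarrow> (Fact ^^ n) (vadd u w) = vadd ((Fact ^^ n) u) ((Fact ^^ n) w)"
  by (induction n) (auto simp: Fact_add)
lemma Fpow_sc: "(Fact ^^ n) (vsc a u) = vsc a ((Fact ^^ n) u)"
  by (induction n) (auto simp: Fact_sc)

lemma gen_T:
  assumes A2: "\<And>k js j. m \<le> length js \<Longrightarrow> l (k, js @ [j]) = T (l (k, js)) j"
    and "hom n u" "m \<le> n"
  shows "lin l (T u j) = T (lin l u) j"
proof -
  have "lin l (T u j) = lin (\<lambda>b. l (app j b)) u" by (rule lin_T)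
  also have "\<dots> = lin (\<lambda>b. T (l b) j) u"
  proof (rule lin_cong)
    fix b assume "u b \<noteq> 0"
    then show "l (app j b) = T (l b) j" using assms
      by (cases b) (auto simp: app_def hom_def)
  qed
  also have "\<dots> = T (lin l u) j" by (rule lin_fT)
  finally show ?thesis .
qed

lemma gen_basis:
  assumes A1: "\<And>b. fs (l b)"
    and A2: "\<And>k js j. m \<le> length js \<Longrightarrow> l (k, js @ [j]) = T (l (k, js)) j"
    and A3: "\<And>k js. length js = m \<Longrightarrow> set js \<subseteq> {0, 1} \<Longrightarrow> lin l (Fact (bvec (k, js))) = Fact (l (k, js))"
  shows "m \<le> length js \<Longrightarrow> set js \<subseteq> {0, 1} \<Longrightarrow> lin l (Fact (bvec (k, js))) = Fact (l (k, js))"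
proof (induction js arbitrary: k rule: rev_induct)
  case Nil
  then show ?case using A3 by simp
next
  case (snoc j js)
  show ?case
  proof (cases "length js < m")
    case True
    then have "length (js @ [j]) = m" using snoc by simp
    then show ?thesis using A3 snoc by blast
  next
    case False
    then have m: "m \<le> length js" by simp
    have sj: "set js \<subseteq> {0, 1}" "j \<le> 1" using snoc by auto
    have hb: "hom (length js) (bvec (k, js))" using sj by (simp add: hom_bvec)
    have hF: "hom (length js) (Fact (bvec (k, js)))" by (rule hom_Fact[OF hb])
    have "lin l (Fact (bvec (k, js @ [j]))) = lin l (Fact (T (bvec (k, js)) j))"
      by (simp add: T_bvec)
    also have "\<dots> = lin l (vadd (vsc (q powi (1 - 2 * int j)) (T (Fact (bvec (k, js))) j))
                    (if j = 0 then T (bvec (k, js)) 1 else zv))"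
      by (simp add: FT)
    also have "\<dots> = vadd (vsc (q powi (1 - 2 * int j)) (T (lin l (Fact (bvec (k, js)))) j))
                    (if j = 0 then T (l (k, js)) 1 else zv)"
      by (simp add: lin_add lin_sc gen_T[OF A2 hF m] gen_T[OF A2 hb m] lin_bvec lin_zv)
    also have "\<dots> = vadd (vsc (q powi (1 - 2 * int j)) (T (Fact (l (k, js))) j))
                    (if j = 0 then T (l (k, js)) 1 else zv)"
      using snoc.IH[OF m sj(1)] by simp
    also have "\<dots> = Fact (T (l (k, js)) j)" by (simp add: FT A1)
    also have "\<dots> = Fact (l (k, js @ [j]))" by (simp add: A2[OF m])
    finally show ?thesis .
  qed
qed

lemma gen_comm:
  assumes A1: "\<And>b. fs (l b)"
    and A2: "\<And>k js j. m \<le> length js \<Longrightarrow> l (k, js @ [j]) = T (l (k, js)) j"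
    and A3: "\<And>k js. length js = m \<Longrightarrow> set js \<subseteq> {0, 1} \<Longrightarrow> lin l (Fact (bvec (k, js))) = Fact (l (k, js))"
    and u: "fs u" "hom n u" "m \<le> n"
  shows "lin l (Fact u) = Fact (lin l u)"
proof -
  have "lin l (Fact u) = lin (\<lambda>b. lin l (Fbb b)) u"
    unfolding Fact_lin by (rule lin_lin) (simp_all add: u)
  also have "\<dots> = lin (\<lambda>b. Fact (l b)) u"
  proof (rule lin_cong)
    fix b assume "u b \<noteq> 0"
    then obtain k js where b: "b = (k, js)" "length js = n" "set js \<subseteq> {0, 1}"
      using u by (cases b) (auto simp: hom_def)
    have "lin l (Fbb b) = lin l (Fact (bvec (k, js)))" by (simp add: b Fbb_def Fact_bvec)
    also have "\<dots> = Fact (l b)" using gen_basis[OF A1 A2 A3] b u by simp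
    finally show "lin l (Fbb b) = Fact (l b)" .
  qed
  also have "\<dots> = Fact (lin l u)"
    unfolding Fact_lin by (rule lin_lin[symmetric]) (simp_all add: u A1)
  finally show ?thesis .
qed

lemma gen_pow:
  assumes A1: "\<And>b. fs (l b)"
    and A2: "\<And>k js j. m \<le> length js \<Longrightarrow> l (k, js @ [j]) = T (l (k, js)) j"
    and A3: "\<And>k js. length js = m \<Longrightarrow> set js \<subseteq> {0, 1} \<Longrightarrow> lin l (Fact (bvec (k, js))) = Fact (l (k, js))"
    and u: "fs u" "hom n u" "m \<le> n"
  shows "lin l ((Fact ^^ p) u) = (Fact ^^ p) (lin l u)"
proof (induction p)
  case 0 then show ?case by simp
next
  case (Suc p)
  have "lin l ((Fact ^^ Suc p) u) = lin l (Fact ((Fact ^^ p) u))" by simp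
  also have "\<dots> = Fact (lin l ((Fact ^^ p) u))"
    by (rule gen_comm[OF A1 A2 A3 _ _ u(3)]) (simp_all add: u hom_Fpow)
  finally show ?case using Suc by simp
qed

lemma qD_nz: "q - inverse q \<noteq> 0"
proof
  assume "q - inverse q = 0"
  then have "q * q = q * inverse q" by simp
  then show False using qq_ne1 q_nz by simp
qed

lemma qint_nat: "qint (int n) = (q ^ n - inverse (q ^ n)) / (q - inverse q)"
  by (simp add: qint_def power_int_minus)

lemma qint0[simp]: "qint 0 = 0" by (simp add: qint_def)

lemma gen_qint_Suc:
  fixes x :: "'a::field"
  assumes "x \<noteq> 0" "x - inverse x \<noteq> 0"
  shows "(x ^ Suc n - inverse (x ^ Suc n)) / (x - inverse x) = x ^ n + inverse x * ((x ^ n - inverse (x ^ n)) / (x - inverse x))"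
proof -
  have e: "x ^ Suc n - inverse (x ^ Suc n) = (x - inverse x) * x ^ n + inverse x * (x ^ n - inverse (x ^ n))"
    by (simp add: inverse_mult_distrib algebra_simps)
  show ?thesis unfolding e using assms(2)
    by (simp add: add_divide_distrib)
qed

lemma qint_Suc: "qint (int (Suc n)) = q ^ n + inverse q * qint (int n)"
  unfolding qint_nat by (rule gen_qint_Suc[OF q_nz qD_nz])

lemma qint_Suc': "qint (1 + int n) = q ^ n + inverse q * qint (int n)"
  using qint_Suc[of n] by simp

lemma qint1[simp]: "qint 1 = 1"
  using qint_Suc[of 0] by simp

lemma qint2: "qint 2 = q + inverse q"
  using qint_Suc[of 1] qint_Suc[of 0] by simp

lemma vsc_vsc[simp]: "vsc a (vsc b u) = vsc (a * b) u" by (simp add: vsc_def mult.assoc)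
lemma F1s: "fs u \<Longrightarrow> Fact (T u (Suc 0)) = vsc (inverse q) (T (Fact u) (Suc 0))"
  using F1 by simp

lemma FpowT:
  assumes "fs u"
  shows "(Fact ^^ b) (T u 0) = vadd (vsc (q ^ b) (T ((Fact ^^ b) u) 0)) (vsc (qint (int b)) (T ((Fact ^^ (b - 1)) u) 1))"
proof (induction b)
  case 0 then show ?case by (simp add: vadd_def vsc_def)
next
  case (Suc b)
  have fs1: "fs ((Fact ^^ b) u)" "fs ((Fact ^^ (b - 1)) u)" using assms by auto
  have "(Fact ^^ Suc b) (T u 0) = Fact (vadd (vsc (q ^ b) (T ((Fact ^^ b) u) 0)) (vsc (qint (int b)) (T ((Fact ^^ (b - 1)) u) 1)))"
    using Suc by simp
  also have "\<dots> = vadd (vsc (q ^ b) (vadd (vsc q (T ((Fact ^^ Suc b) u) 0)) (T ((Fact ^^ b) u) 1)))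
       (vsc (qint (int b) * inverse q) (T (Fact ((Fact ^^ (b - 1)) u)) 1))"
    using fs1 by (simp add: Fact_add Fact_sc F0 F1s)
  also have "\<dots> = vadd (vsc (q ^ Suc b) (T ((Fact ^^ Suc b) u) 0)) (vsc (qint (int (Suc b))) (T ((Fact ^^ (Suc b - 1)) u) 1))"
  proof (cases b)
    case 0 then show ?thesis by (simp add: vadd_def vsc_def qint_Suc)
  next
    case (Suc b')
    then have e: "Fact ((Fact ^^ (b - 1)) u) = (Fact ^^ b) u" by simp
    show ?thesis unfolding e by (rule ext) (simp add: vadd_def vsc_def qint_Suc' algebra_simps)
  qed
  finally show ?case .
qed

lemma Fpow_e: "(Fact ^^ n) (bvec (k, [])) = bvec (k + n, [])"
  by (induction n) (simp_all add: Fact_bvec)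

lemma vrho_single: "vrho [b] = (Fact ^^ b) (bvec (0, []))"
  by (simp add: vrho_def)

lemma vrho_snoc: "xs \<noteq> [] \<Longrightarrow> vrho (xs @ [b]) = (Fact ^^ b) (T (vrho xs) 0)"
  by (cases xs) (simp_all add: vrho_def T_def)

lemma fs_vrho[simp]: "fs (vrho xs)"
proof (induction xs rule: rev_induct)
  case Nil then show ?case by (simp add: vrho_def)
next
  case (snoc x xs) then show ?case
    by (cases "xs = []") (simp_all add: vrho_single vrho_snoc)
qed

lemma hom_vrho: "xs \<noteq> [] \<Longrightarrow> hom (length xs - 1) (vrho xs)"
proof (induction xs rule: rev_induct)
  case Nil then show ?case by simp
next
  case (snoc x xs) then show ?case
  proof (cases "xs = []")
    case True then show ?thesis by (simp add: vrho_single Fpow_e hom_bvec)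
  next
    case False
    then have "hom (length xs - 1) (vrho xs)" using snoc by simp
    then have "hom (Suc (length xs - 1)) (T (vrho xs) 0)" by (rule hom_T) simp
    then have "hom (length (xs @ [x]) - 1) (T (vrho xs) 0)" using False by simp
    then show ?thesis using False by (simp add: vrho_snoc hom_Fpow)
  qed
qed

lemma Fpow_vrho: "(Fact ^^ n) (vrho (xs @ [a])) = vrho (xs @ [a + n])"
proof (cases "xs = []")
  case True then show ?thesis
    by (simp add: vrho_single) (metis add.commute comp_apply funpow_add)
next
  case False then show ?thesis
    by (simp add: vrho_snoc) (metis add.commute comp_apply funpow_add)
qed

definition lc :: "nat \<Rightarrow> basis \<Rightarrow> vec" where
  "lc i = (\<lambda>(k, js). vsc (capV (js ! (i - 1)) (js ! i)) (bvec (k, take (i - 1) js @ drop (i + 1) js)))"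

lemma capi_lin: "capi i = lin (lc i)" by (simp add: capi_def lc_def)

lemma capA1: "fs (lc i b)" by (simp add: lc_def split: prod.split)

lemma capA2: "1 \<le> i \<Longrightarrow> i + 1 \<le> length js \<Longrightarrow> lc i (k, js @ [j]) = T (lc i (k, js)) j"
  by (simp add: lc_def nth_append_left T_vsc T_bvec)

lemma nth_pre2: "length pre = p \<Longrightarrow> (pre @ [a, c]) ! p = a \<and> (pre @ [a, c]) ! Suc p = c"
  by (simp add: nth_append)

lemma lc_pre2: "1 \<le> i \<Longrightarrow> length pre = i - 1 \<Longrightarrow> lc i (k, pre @ [a, c]) = vsc (capV a c) (bvec (k, pre))"
proof -
  assume "1 \<le> i" "length pre = i - 1"
  then obtain p where p: "i = Suc p" "length pre = p" by (cases i) auto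
  then show ?thesis using nth_pre2[OF p(2), of a c] by (simp add: lc_def)
qed

lemma capi_add: "fs u \<Longrightarrow> fs w \<Longrightarrow> capi i (vadd u w) = vadd (capi i u) (capi i w)"
  unfolding capi_lin by (rule lin_add)
lemma capi_sc: "capi i (vsc a u) = vsc a (capi i u)"
  unfolding capi_lin by (rule lin_sc)

lemma cap_TT:
  assumes "1 \<le> i" "hom (i - 1) z" "fs z"
  shows "capi i (T (T z a) c) = vsc (capV a c) z"
proof -
  have "capi i (T (T z a) c) = lin (\<lambda>b. lc i (app c (app a b))) z"
    unfolding capi_lin by (simp add: lin_T)
  also have "\<dots> = lin (\<lambda>b. vsc (capV a c) (bvec b)) z"
  proof (rule lin_cong)
    fix b assume "z b \<noteq> 0"
    then obtain k pre where b: "b = (k, pre)" "length pre = i - 1"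
      using assms(2) by (cases b) (auto simp: hom_def)
    then show "lc i (app c (app a b)) = vsc (capV a c) (bvec b)"
      using lc_pre2[OF assms(1) b(2)] by (simp add: app_def)
  qed
  also have "\<dots> = vsc (capV a c) z" by (simp add: lin_fsc lin_id assms(3))
  finally show ?thesis .
qed

lemma capA3:
  assumes i: "1 \<le> i" and len: "length js = i + 1" and st: "set js \<subseteq> {0, 1}"
  shows "lin (lc i) (Fact (bvec (k, js))) = Fact (lc i (k, js))"
proof -
  obtain xs c where xs: "js = xs @ [c]" using len by (cases js rule: rev_cases) auto
  obtain pre a where pre: "xs = pre @ [a]" using len xs i by (cases xs rule: rev_cases) auto
  have js: "js = pre @ [a, c]" using xs pre by simp
  have lp: "length pre = i - 1" using len js by simp
  have ac: "a \<le> 1" "c \<le> 1" "set pre \<subseteq> {0, 1}" using st js by auto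
  define y where "y = bvec (k, pre)"
  have hy: "hom (i - 1) y" "fs y" using lp ac by (simp_all add: y_def hom_bvec)
  have hFy: "hom (i - 1) (Fact y)" "fs (Fact y)" using hy by (simp_all add: hom_Fact)
  have bj: "bvec (k, js) = T (T y a) c" by (simp add: js y_def T_bvec)
  have r: "lc i (k, js) = vsc (capV a c) y" using lc_pre2[OF i lp] by (simp add: js y_def)
  note cc = cap_TT[OF i hy(1) hy(2)] cap_TT[OF i hFy(1) hFy(2)]
  have X: "capi i (Fact (T (T y a) c)) = Fact (vsc (capV a c) y)"
  proof -
    have "a = 0 \<or> a = 1" "c = 0 \<or> c = 1" using ac by auto
    then show ?thesis
    proof (elim disjE)
      assume "a = 0" "c = 0"
      then show ?thesis using hy hFy q_nz
        by (simp add: F0 F1 F1s T_vadd T_vsc capi_add capi_sc cc Fact_sc capV_def)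
          (rule ext, simp add: vadd_def vsc_def zv_def)
    next
      assume "a = 0" "c = 1"
      then show ?thesis using hy hFy q_nz
        by (simp add: F0 F1 F1s T_vadd T_vsc capi_add capi_sc cc Fact_sc capV_def)
          (rule ext, simp add: vadd_def vsc_def)
    next
      assume "a = 1" "c = 0"
      then show ?thesis using hy hFy q_nz
        by (simp add: F0 F1 F1s T_vadd T_vsc capi_add capi_sc cc Fact_sc capV_def)
          (rule ext, simp add: vadd_def vsc_def)
    next
      assume "a = 1" "c = 1"
      then show ?thesis using hy hFy q_nz
        by (simp add: F0 F1 F1s T_vadd T_vsc capi_add capi_sc cc Fact_sc capV_def)
    qed
  qed
  from X show ?thesis unfolding capi_lin[symmetric] bj r by simp
qed

lemma capi_pow:
  assumes "1 \<le> i" "fs u" "hom n u" "i + 1 \<le> n"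
  shows "capi i ((Fact ^^ p) u) = (Fact ^^ p) (capi i u)"
proof -
  have A2: "\<And>k js j. i + 1 \<le> length js \<Longrightarrow> lc i (k, js @ [j]) = T (lc i (k, js)) j"
    using capA2 assms(1) by blast
  have A3: "\<And>k js. length js = i + 1 \<Longrightarrow> set js \<subseteq> {0, 1} \<Longrightarrow> lin (lc i) (Fact (bvec (k, js))) = Fact (lc i (k, js))"
    using capA3 assms(1) by blast
  show ?thesis unfolding capi_lin by (rule gen_pow[OF capA1 A2 A3 assms(2,3,4)])
qed

lemma capi_T:
  assumes "1 \<le> i" "hom n u" "i + 1 \<le> n"
  shows "capi i (T u j) = T (capi i u) j"
proof -
  have A2: "\<And>k js j. i + 1 \<le> length js \<Longrightarrow> lc i (k, js @ [j]) = T (lc i (k, js)) j"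
    using capA2 assms(1) by blast
  show ?thesis unfolding capi_lin by (rule gen_T[OF A2 assms(2,3)])
qed

lemma vsc_zero: "vsc 0 u = vsc 0 w" by (simp add: vsc_def)

lemma cap_last:
  assumes i: "1 \<le> i" and lp: "length pre = i - 1"
  shows "capi i (vrho (pre @ [a, b, d])) = vsc (- inverse q * qint (int b)) (vrho (pre @ [a + b + d - 1]))"
proof -
  define y where "y = vrho (pre @ [a])"
  have hy: "hom (i - 1) y" "fs y" using hom_vrho[of "pre @ [a]"] lp by (simp_all add: y_def)
  have v: "vrho (pre @ [a, b, d]) = (Fact ^^ d) (T ((Fact ^^ b) (T y 0)) 0)"
    using vrho_snoc[of "pre @ [a, b]" d] vrho_snoc[of "pre @ [a]" b] by (simp add: y_def)
  have h: "hom (i + 1) (T ((Fact ^^ b) (T y 0)) 0)"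
  proof -
    have "hom (Suc (Suc (i - 1))) (T ((Fact ^^ b) (T y 0)) 0)"
      by (intro hom_T hom_Fpow hy(1)) simp_all
    then show ?thesis using i by simp
  qed
  have fs1: "fs ((Fact ^^ b) y)" "fs ((Fact ^^ (b - Suc 0)) y)" using hy by simp_all
  have h1: "hom (i - 1) ((Fact ^^ b) y)" "hom (i - 1) ((Fact ^^ (b - Suc 0)) y)" using hy by (simp_all add: hom_Fpow)
  have "capi i (vrho (pre @ [a, b, d])) = (Fact ^^ d) (capi i (T ((Fact ^^ b) (T y 0)) 0))"
    unfolding v by (rule capi_pow[OF i _ h le_refl]) (simp add: hy)
  also have "capi i (T ((Fact ^^ b) (T y 0)) 0) = vsc (- inverse q * qint (int b)) ((Fact ^^ (b - 1)) y)"
    using fs1 by (simp add: FpowT hy T_vadd T_vsc capi_add capi_sc cap_TT[OF i h1(1) fs1(1)]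
        cap_TT[OF i h1(2) fs1(2)] capV_def) (rule ext, simp add: vadd_def vsc_def)
  also have "(Fact ^^ d) (vsc (- inverse q * qint (int b)) ((Fact ^^ (b - 1)) y))
      = vsc (- inverse q * qint (int b)) (vrho (pre @ [a + (b - 1) + d]))"
    by (simp add: Fpow_sc y_def Fpow_vrho)
  also have "\<dots> = vsc (- inverse q * qint (int b)) (vrho (pre @ [a + b + d - 1]))"
    by (cases b) (simp_all add: vsc_def)
  finally show ?thesis .
qed

lemma nth_pre3: "length pre = p \<Longrightarrow> (pre @ [a, b, d]) ! p = a \<and> (pre @ [a, b, d]) ! Suc p = b \<and> (pre @ [a, b, d]) ! Suc (Suc p) = d"
  by (simp add: nth_append)

lemma part1:
  assumes i: "1 \<le> i"
  shows "i + 2 \<le> length bs \<Longrightarrow> capi i (vrho bs) = vsc (- inverse q * qint (int (bs ! i)))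
      (vrho (take (i - 1) bs @ [bs ! (i - 1) + bs ! i + bs ! (i + 1) - 1] @ drop (i + 2) bs))"
proof (induction bs rule: rev_induct)
  case Nil then show ?case by simp
next
  case (snoc d bs)
  show ?case
  proof (cases "length bs = i + 1")
    case True
    obtain xs b where xs: "bs = xs @ [b]" using True by (cases bs rule: rev_cases) auto
    obtain pre a where pre: "xs = pre @ [a]" using True xs i by (cases xs rule: rev_cases) auto
    obtain p where p: "i = Suc p" using i by (cases i) auto
    have lp: "length pre = p" using True xs pre p by simp
    have e: "bs @ [d] = pre @ [a, b, d]" using xs pre by simp
    show ?thesis unfolding e using cap_last[OF i, of pre a b d] lp p nth_pre3[OF lp, of a b d]
      by simp
  next
    case False
    then have le: "i + 2 \<le> length bs" using snoc.prems by simp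
    have ne: "bs \<noteq> []" using le by auto
    have hb: "hom (length bs - 1) (vrho bs)" by (rule hom_vrho[OF ne])
    have hT: "hom (length bs) (T (vrho bs) 0)" using hom_T[OF hb, of 0] ne by simp
    let ?L = "take (i - 1) bs @ [bs ! (i - 1) + bs ! i + bs ! (i + 1) - 1] @ drop (i + 2) bs"
    have "capi i (vrho (bs @ [d])) = (Fact ^^ d) (capi i (T (vrho bs) 0))"
      unfolding vrho_snoc[OF ne] by (rule capi_pow[OF i _ hT]) (use le in simp_all)
    also have "\<dots> = (Fact ^^ d) (T (capi i (vrho bs)) 0)"
      using capi_T[OF i hb] le by simp
    also have "\<dots> = vsc (- inverse q * qint (int (bs ! i))) (vrho (?L @ [d]))"
      using snoc.IH[OF le] vrho_snoc[of ?L d] by (simp add: T_vsc Fpow_sc)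
    finally show ?thesis using le by (simp add: nth_append_left)
  qed
qed

definition lu :: "nat \<Rightarrow> basis \<Rightarrow> vec" where
  "lu i = (\<lambda>(k, js). vadd (vsc (- q) (bvec (k, take (i - 1) js @ [0, 1] @ drop (i - 1) js)))
                                 (bvec (k, take (i - 1) js @ [1, 0] @ drop (i - 1) js)))"

lemma cupi_lin: "cupi i = lin (lu i)" by (simp add: cupi_def lu_def)

lemma cupA1: "fs (lu i b)" by (simp add: lu_def split: prod.split)

lemma cupA2: "i - 1 \<le> length js \<Longrightarrow> lu i (k, js @ [j]) = T (lu i (k, js)) j"
  by (simp add: lu_def T_vadd T_vsc T_bvec)

lemma cupi_add: "fs u \<Longrightarrow> fs w \<Longrightarrow> cupi i (vadd u w) = vadd (cupi i u) (cupi i w)"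
  unfolding cupi_lin by (rule lin_add)
lemma cupi_sc: "cupi i (vsc a u) = vsc a (cupi i u)"
  unfolding cupi_lin by (rule lin_sc)

lemma cup_end:
  assumes "hom (i - 1) z" "fs z"
  shows "cupi i z = vadd (vsc (- q) (T (T z 0) 1)) (T (T z 1) 0)"
proof -
  have "cupi i z = lin (\<lambda>b. vadd (vsc (- q) (T (T (bvec b) 0) 1)) (T (T (bvec b) 1) 0)) z"
    unfolding cupi_lin
  proof (rule lin_cong)
    fix b assume "z b \<noteq> 0"
    then obtain k js where b: "b = (k, js)" "length js = i - 1"
      using assms(1) by (cases b) (auto simp: hom_def)
    then show "lu i b = vadd (vsc (- q) (T (T (bvec b) 0) 1)) (T (T (bvec b) 1) 0)"
      by (simp add: lu_def T_bvec)
  qed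
  also have "\<dots> = vadd (vsc (- q) (T (T z 0) 1)) (T (T z 1) 0)"
    by (simp add: lin_fadd lin_fsc lin_fT lin_id assms(2))
  finally show ?thesis .
qed

lemma cupA3:
  assumes len: "length js = i - 1" and st: "set js \<subseteq> {0, 1}"
  shows "lin (lu i) (Fact (bvec (k, js))) = Fact (lu i (k, js))"
proof -
  define y where "y = bvec (k, js)"
  have hy: "hom (i - 1) y" "fs y" using len st by (simp_all add: y_def hom_bvec)
  have hFy: "hom (i - 1) (Fact y)" "fs (Fact y)" using hy by (simp_all add: hom_Fact)
  have r: "lu i (k, js) = vadd (vsc (- q) (T (T y 0) 1)) (T (T y 1) 0)"
    using len by (simp add: lu_def y_def T_bvec)
  have "cupi i (Fact y) = Fact (lu i (k, js))"
    unfolding r cup_end[OF hFy] using hy q_nz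
    by (simp add: Fact_add Fact_sc F0 F1s T_vadd T_vsc) (rule ext, simp add: vadd_def vsc_def algebra_simps)
  then show ?thesis unfolding cupi_lin y_def .
qed

lemma cupi_pow:
  assumes "fs u" "hom n u" "i - 1 \<le> n"
  shows "cupi i ((Fact ^^ p) u) = (Fact ^^ p) (cupi i u)"
  unfolding cupi_lin by (rule gen_pow[OF cupA1 cupA2 cupA3 assms])

lemma cupi_T:
  assumes "hom n u" "i - 1 \<le> n"
  shows "cupi i (T u j) = T (cupi i u) j"
  unfolding cupi_lin by (rule gen_T[OF cupA2 assms])

lemma cup_base:
  assumes ne: "xs \<noteq> []"
  shows "cupi (length xs) (vrho xs) =
      vadd (vadd (vsc (q * qint 2) (vrho (xs @ [1, 0])))
                 (vsc (- q) (vrho (butlast xs @ [last xs + 1, 0, 0]))))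
           (vsc (- q) (vrho (xs @ [0, 1])))"
proof -
  define v where "v = vrho xs"
  have hv: "hom (length xs - 1) v" "fs v" using hom_vrho[OF ne] by (simp_all add: v_def)
  have hFv: "fs (Fact v)" using hv by simp
  have e1: "vrho (xs @ [1, 0]) = T (Fact (T v 0)) 0"
    using vrho_snoc[of "xs @ [1]" 0] vrho_snoc[OF ne, of 1] by (simp add: v_def)
  have e2: "vrho (xs @ [0, 1]) = Fact (T (T v 0) 0)"
    using vrho_snoc[of "xs @ [0]" 1] vrho_snoc[OF ne, of 0] by (simp add: v_def)
  have e3: "vrho (butlast xs @ [last xs + 1, 0, 0]) = T (T (Fact v) 0) 0"
  proof -
    have xs: "xs = butlast xs @ [last xs]" using ne by simp
    have a: "vrho (butlast xs @ [last xs + 1]) = Fact v"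
      using Fpow_vrho[of 1 "butlast xs" "last xs"] xs by (simp add: v_def)
    show ?thesis
      using vrho_snoc[of "butlast xs @ [last xs + 1, 0]" 0] vrho_snoc[of "butlast xs @ [last xs + 1]" 0] a
      by simp
  qed
  show ?thesis unfolding e1 e2 e3 cup_end[OF hv(1) hv(2)] v_def[symmetric] using hv hFv q_nz
    by (simp add: F0 F1s Fact_add Fact_sc T_vadd T_vsc qint2)
      (rule ext, simp add: vadd_def vsc_def algebra_simps)
qed

lemma part2:
  assumes i: "1 \<le> i"
  shows "i \<le> length bs \<Longrightarrow> cupi i (vrho bs) =
              vadd (vadd (vsc (q * qint 2) (vrho (take i bs @ [1, 0] @ drop i bs)))
                         (vsc (- q) (vrho (take (i - 1) bs @ [bs ! (i - 1) + 1, 0, 0] @ drop i bs))))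
                   (vsc (- q) (vrho (take i bs @ [0, 1] @ drop i bs)))"
proof (induction bs rule: rev_induct)
  case Nil then show ?case using i by simp
next
  case (snoc d bs)
  show ?case
  proof (cases "i = length bs + 1")
    case True
    have ne: "bs @ [d] \<noteq> []" by simp
    show ?thesis using cup_base[OF ne] True by (simp add: nth_append)
  next
    case False
    then have le: "i \<le> length bs" using snoc.prems by simp
    have ne: "bs \<noteq> []" using le i by auto
    have hb: "hom (length bs - 1) (vrho bs)" by (rule hom_vrho[OF ne])
    have hT: "hom (length bs) (T (vrho bs) 0)" using hom_T[OF hb, of 0] ne by simp
    let ?L1 = "take i bs @ [1, 0] @ drop i bs"
    let ?L2 = "take (i - 1) bs @ [bs ! (i - 1) + 1, 0, 0] @ drop i bs"
    let ?L3 = "take i bs @ [0, 1] @ drop i bs"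
    have "cupi i (vrho (bs @ [d])) = (Fact ^^ d) (cupi i (T (vrho bs) 0))"
      unfolding vrho_snoc[OF ne] by (rule cupi_pow[OF _ hT]) (use le in simp_all)
    also have "\<dots> = (Fact ^^ d) (T (cupi i (vrho bs)) 0)"
      using cupi_T[OF hb] le by simp
    also have "\<dots> = vadd (vadd (vsc (q * qint 2) (vrho (?L1 @ [d])))
                         (vsc (- q) (vrho (?L2 @ [d]))))
                   (vsc (- q) (vrho (?L3 @ [d])))"
      using snoc.IH[OF le] vrho_snoc[of ?L1 d] vrho_snoc[of ?L2 d] vrho_snoc[of ?L3 d]
      by (simp add: T_vsc T_vadd Fpow_sc Fpow_add)
    finally show ?thesis using le i by (simp add: nth_append_left)
  qed
qed

lemma qbeta_nat: "qbeta (1 - int k) = (lam * (q * inverse (q ^ k)) - inverse lam * (q ^ k * inverse q)) / (q - inverse q)"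
proof -
  have a: "q powi (1 - int k) = q * inverse (q ^ k)"
    using power_int_add[of q 1 "- int k"] q_nz by (simp add: power_int_minus)
  have b: "q powi (- (1 - int k)) = q ^ k * inverse q"
    using power_int_add[of q "int k" "- 1"] q_nz by (simp add: power_int_minus)
  show ?thesis unfolding qbeta_def a b ..
qed

lemma cancelD:
  fixes c D A B :: "'a::field"
  shows "D \<noteq> 0 \<Longrightarrow> c * D * (A / D) * (B / D) = c * A * B / D"
  by (simp add: field_simps power2_eq_square)

lemma gen_B:
  fixes x l Q y m R :: "'a::field"
  assumes xy: "x * y = 1" and lm: "l * m = 1" and QR: "Q * R = 1" and D: "x - y \<noteq> 0"
  shows "x * (- x * (x - y) * (((x * Q) - y * R) / (x - y))
             * ((l * (x * (y * R)) - m * ((x * Q) * y)) / (x - y)))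
         + (m + l * x ^ 2 - m * ((x * Q) ^ 2))
       = m * Q ^ 2 + (- x * (x - y) * ((Q - R) / (x - y))
             * ((l * (x * R) - m * (Q * y)) / (x - y))) * y"
proof -
  have e1: "x * (- x * (x - y) * (((x * Q) - y * R) / (x - y))
             * ((l * (x * (y * R)) - m * ((x * Q) * y)) / (x - y)))
      = - x * x * ((x * Q) - y * R) * ((l * (x * (y * R)) - m * ((x * Q) * y))) / (x - y)"
    by (subst mult.assoc[symmetric], subst cancelD[OF D]) (simp add: algebra_simps)
  have e2: "(- x * (x - y) * ((Q - R) / (x - y))
             * ((l * (x * R) - m * (Q * y)) / (x - y))) * y
      = - x * y * (Q - R) * (l * (x * R) - m * (Q * y)) / (x - y)"
    by (subst mult.assoc[symmetric], subst cancelD[OF D]) (simp add: algebra_simps)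
  have e3: "- x * x * ((x * Q) - y * R) * ((l * (x * (y * R)) - m * ((x * Q) * y))) / (x - y)
         + (m + l * x ^ 2 - m * ((x * Q) ^ 2))
       = m * Q ^ 2 + - x * y * (Q - R) * (l * (x * R) - m * (Q * y)) / (x - y)"
  proof -
    have "- x * x * ((x * Q) - y * R) * ((l * (x * (y * R)) - m * ((x * Q) * y)))
         + (m + l * x ^ 2 - m * ((x * Q) ^ 2)) * (x - y)
       = m * Q ^ 2 * (x - y) + - x * y * (Q - R) * (l * (x * R) - m * (Q * y))"
      using xy lm QR by algebra
    then show ?thesis using D by (simp add: field_simps)
  qed
  show ?thesis unfolding e1 e2 by (rule e3)
qed

definition ck :: "nat \<Rightarrow> K" where "ck k = - q * (q - inverse q) * qint (int k) * qbeta (1 - int k)"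
definition Ek :: "nat \<Rightarrow> K" where "Ek k = inverse lam + lam * q ^ 2 - inverse lam * q ^ (2 * (k + 1))"
definition Gk :: "nat \<Rightarrow> K" where "Gk k = - inverse lam * q ^ (2 * (k + 1)) * (q - inverse q)"

definition lx :: "basis \<Rightarrow> vec" where
  "lx = (\<lambda>(k, js). case js of [] \<Rightarrow> zv
     | j # rest \<Rightarrow>
       (if j = 0 then
          vadd (vsc (inverse lam * q ^ (2 * k)) (bvec (k, 0 # rest))) (vsc (ck k) (bvec (k - 1, 1 # rest)))
        else
          vadd (vsc (Ek k) (bvec (k, 1 # rest))) (vsc (Gk k) (bvec (k + 1, 0 # rest)))))"

lemma xiop_lin: "xiop = lin lx"
  unfolding xiop_def lx_def ck_def Ek_def Gk_def zv_def by simp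

lemma xiA1: "fs (lx b)" by (simp add: lx_def split: prod.split list.split)

lemma xiA2: "1 \<le> length js \<Longrightarrow> lx (k, js @ [j]) = T (lx (k, js)) j"
  by (cases js) (simp_all add: lx_def T_vadd T_vsc T_bvec)

lemma lx0: "lx (k, [0]) = vadd (vsc (inverse lam * q ^ (2 * k)) (bvec (k, [0]))) (vsc (ck k) (bvec (k - 1, [1])))"
  by (simp add: lx_def)
lemma lx1: "lx (k, [Suc 0]) = vadd (vsc (Ek k) (bvec (k, [1]))) (vsc (Gk k) (bvec (k + 1, [0])))"
  by (simp add: lx_def)

lemma Fb0: "Fact (bvec (k, [0])) = vadd (vsc q (bvec (Suc k, [0]))) (bvec (k, [1]))"
  by (simp add: Fact_bvec Fb_Cons T_bvec)
lemma Fb1: "Fact (bvec (k, [Suc 0])) = vsc (inverse q) (bvec (Suc k, [1]))"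
  by (simp add: Fact_bvec Fb_Cons T_bvec power_int_minus)

lemma ck0[simp]: "ck 0 = 0" by (simp add: ck_def)

lemma Fck: "Fact (vsc (ck k) (bvec (k - 1, [1]))) = vsc (ck k * inverse q) (bvec (k, [1]))"
  by (cases k; simp add: Fact_sc Fb1; simp add: vsc_def)

lemma ring_rel: "q * inverse q = 1" "lam * inverse lam = 1" "q ^ k * inverse (q ^ k) = 1"
  using q_nz lam_nz by simp_all

lemma pw1: "q ^ (2 * k) = (q ^ k) ^ 2"
  by (metis mult.commute power_mult)
lemma pw2: "q ^ (2 * (k + 1)) = (q * q ^ k) ^ 2"
  by (metis mult.commute power_mult power_Suc Suc_eq_plus1)
lemma pw3: "q ^ Suc k = q * q ^ k" by simp
lemma pw4: "inverse (q * q ^ k) = inverse q * inverse (q ^ k)"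
  by (simp add: inverse_mult_distrib mult.commute)

lemma pw5: "q ^ (k + 1) = q * q ^ k" by simp

lemma S1: "q * (inverse lam * q ^ (2 * (k + 1))) + Gk k = inverse lam * q ^ (2 * k) * q"
  unfolding Gk_def pw2 pw5 pw1[of k] using q_nz lam_nz by (simp add: field_simps power2_eq_square)

lemma S2: "q * ck (k + 1) + Ek k = inverse lam * q ^ (2 * k) + ck k * inverse q"
  unfolding ck_def Ek_def qint_nat qbeta_nat pw2 pw5 pw4 pw1[of k]
  by (rule gen_B[OF ring_rel(1,2,3) qD_nz])

lemma T1: "inverse q * Ek (k + 1) = Ek k * inverse q + Gk k"
  unfolding Ek_def Gk_def pw2 pw5 using q_nz lam_nz by (simp add: field_simps power2_eq_square)

lemma T2: "inverse q * Gk (k + 1) = Gk k * q"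
  unfolding Gk_def pw2 pw5 using q_nz lam_nz by (simp add: field_simps power2_eq_square)

lemma U1: "inverse lam * q ^ (2 * (n + 1)) = (inverse lam * q ^ (n + 1) - lam * q * qint (int (n + 1))) * q ^ (n + 1)
   + lam * q ^ 2 * qint (int (n + 1)) * q ^ n"
  unfolding pw2 pw5 by (simp add: algebra_simps power2_eq_square)

lemma gen_U2:
  fixes x l Q y m R :: "'a::field"
  assumes xy: "x * y = 1" and lm: "l * m = 1" and QR: "Q * R = 1" and D: "x - y \<noteq> 0"
  shows "- x * (x - y) * (((x * Q) - y * R) / (x - y)) * ((l * (x * (y * R)) - m * ((x * Q) * y)) / (x - y))
    = (m * (x * Q) - l * x * (((x * Q) - y * R) / (x - y))) * (((x * Q) - y * R) / (x - y))
      + l * x ^ 2 * (((x * Q) - y * R) / (x - y)) * ((Q - R) / (x - y))"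
proof -
  define P where "P = ((x * Q) - y * R) / (x - y)"
  define Z where "Z = (l * (x * (y * R)) - m * ((x * Q) * y)) / (x - y)"
  define S where "S = (Q - R) / (x - y)"
  have r1: "P * (x - y) = (x * Q) - y * R" using D by (simp add: P_def)
  have r2: "Z * (x - y) = l * (x * (y * R)) - m * ((x * Q) * y)" using D by (simp add: Z_def)
  have r3: "S * (x - y) = Q - R" using D by (simp add: S_def)
  have "(x - y) * (x - y) * (- x * (x - y) * P * Z - ((m * (x * Q) - l * x * P) * P + l * x ^ 2 * P * S)) = 0"
    using xy lm QR r1 r2 r3 by algebra
  then have "- x * (x - y) * P * Z = (m * (x * Q) - l * x * P) * P + l * x ^ 2 * P * S"
    using D by simp
  then show ?thesis unfolding P_def Z_def S_def .
qed

lemma U2: "ck (n + 1) = (inverse lam * q ^ (n + 1) - lam * q * qint (int (n + 1))) * qint (int (n + 1))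
   + lam * q ^ 2 * qint (int (n + 1)) * qint (int n)"
  unfolding ck_def qint_nat qbeta_nat pw5 pw4
  by (rule gen_U2[OF ring_rel(1,2,3) qD_nz])

lemma vsc_vadd: "vsc a (vadd u w) = vadd (vsc a u) (vsc a w)"
  by (simp add: vsc_def vadd_def algebra_simps)

lemma Fck2: "vsc (ck k) (Fact (bvec (k - Suc 0, [Suc 0]))) = vsc (ck k * inverse q) (bvec (k, [Suc 0]))"
  using Fck[of k] by (simp add: Fact_sc)

lemma Gsub: "Gk k = inverse lam * q ^ (2 * k) * q - q * (inverse lam * q ^ (2 * (k + 1)))"
  using S1[of k] by (simp add: algebra_simps)
lemma Esub: "Ek k = inverse lam * q ^ (2 * k) + ck k * inverse q - q * ck (k + 1)"
  using S2[of k] by (simp add: algebra_simps)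

lemma xiA3:
  assumes len: "length js = 1" and st: "set js \<subseteq> {0, 1}"
  shows "lin lx (Fact (bvec (k, js))) = Fact (lx (k, js))"
proof -
  obtain j where js: "js = [j]" using len by (cases js) auto
  have "j = 0 \<or> j = 1" using st js by auto
  then show ?thesis
  proof
    assume j: "j = 0"
    have "lin lx (Fact (bvec (k, js))) = vadd (vsc q (lx (Suc k, [0]))) (lx (k, [Suc 0]))"
      by (simp add: js j Fb0 lin_add lin_sc lin_bvec)
    also have "\<dots> = Fact (lx (k, js))"
      unfolding lx0 lx1 js j
      by (simp add: Fact_add Fact_sc Fck2 Fb0 vsc_vadd Gsub[of k] Esub[of k])
        (rule ext, simp add: vadd_def vsc_def algebra_simps)
    finally show ?thesis .
  next
    assume j: "j = 1"
    have "lin lx (Fact (bvec (k, js))) = vsc (inverse q) (lx (Suc k, [Suc 0]))"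
      by (simp add: js j Fb1 lin_sc lin_bvec)
    also have "\<dots> = Fact (lx (k, js))"
      unfolding lx1 js j
      using T1[of k] T2[of k]
      by (simp add: lx1 Fact_add Fact_sc Fb0 Fb1 vsc_vadd)
        (rule ext, simp add: vadd_def vsc_def algebra_simps)
    finally show ?thesis .
  qed
qed

lemma xi_pow:
  assumes "fs u" "hom n u" "1 \<le> n"
  shows "xiop ((Fact ^^ p) u) = (Fact ^^ p) (xiop u)"
  unfolding xiop_lin by (rule gen_pow[OF xiA1 xiA2 xiA3 assms])

lemma xi_T:
  assumes "hom n u" "1 \<le> n"
  shows "xiop (T u j) = T (xiop u) j"
  unfolding xiop_lin by (rule gen_T[OF xiA2 assms])

lemma qvsc_fix: "vsc (qint (int n)) (bvec (1 + (n - 1), js)) = vsc (qint (int n)) (bvec (n, js))"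
  by (cases n) (simp_all add: vsc_def)

lemma xi_base:
  "xiop (vrho [b0, b1]) =
     vadd (vsc (inverse lam * q ^ b0 - lam * q * qint (int b0)) (vrho [0, b0 + b1]))
          (vsc (lam * q ^ 2 * qint (int b0)) (vrho [1, b0 + b1 - 1]))"
proof -
  have v: "vrho [b0, b1] = (Fact ^^ b1) (bvec (b0, [0]))"
    using vrho_snoc[of "[b0]" b1] by (simp add: vrho_single Fpow_e T_bvec)
  have h: "hom 1 (bvec (b0, [0]))" by (simp add: hom_bvec)
  have "xiop (vrho [b0, b1]) = (Fact ^^ b1) (lx (b0, [0]))"
    unfolding v xi_pow[OF fs_bvec h le_refl] by (simp add: xiop_lin lin_bvec)
  also have "\<dots> = vadd (vsc (inverse lam * q ^ b0 - lam * q * qint (int b0)) (vrho [0, b0 + b1]))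
          (vsc (lam * q ^ 2 * qint (int b0)) (vrho [1, b0 + b1 - 1]))"
  proof (cases b0)
    case 0
    have r: "vrho [0, b1] = (Fact ^^ b1) (bvec (0, [0]))"
      using vrho_snoc[of "[0]" b1] by (simp add: vrho_single T_bvec)
    show ?thesis unfolding 0 lx0 using r
      by (simp add: Fpow_add Fpow_sc) (rule ext, simp add: vadd_def vsc_def)
  next
    case (Suc n)
    have W: "lx (Suc n, [0]) = vadd (vsc (inverse lam * q ^ (2 * (n + 1))) (bvec (Suc n, [0])))
        (vsc (ck (n + 1)) (bvec (n, [1])))" by (simp add: lx0)
    have P1: "vrho [0, b0 + b1] = (Fact ^^ b1) (vadd (vsc (q ^ (n + 1)) (bvec (Suc n, [0])))
        (vsc (qint (int (n + 1))) (bvec (n, [1]))))"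
    proof -
      have "vrho [0, b0 + b1] = (Fact ^^ (b1 + Suc n)) (T (bvec (0, [])) 0)"
        using vrho_snoc[of "[0]" "b0 + b1"] by (simp add: vrho_single Suc add.commute)
      also have "\<dots> = (Fact ^^ b1) ((Fact ^^ Suc n) (T (bvec (0, [])) 0))"
        by (simp only: funpow_add o_apply)
      also have "\<dots> = (Fact ^^ b1) (vadd (vsc (q ^ (n + 1)) (bvec (Suc n, [0])))
        (vsc (qint (int (n + 1))) (bvec (n, [1]))))"
        by (simp only: FpowT[OF fs_bvec]) (simp add: Fpow_e T_bvec Fact_bvec)
      finally show ?thesis .
    qed
    have P2: "vrho [1, b0 + b1 - 1] = (Fact ^^ b1) (vadd (vsc (q ^ n) (bvec (Suc n, [0])))
        (vsc (qint (int n)) (bvec (n, [1]))))"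
    proof -
      have "vrho [1, b0 + b1 - 1] = (Fact ^^ (b1 + n)) (T (bvec (1, [])) 0)"
        using vrho_snoc[of "[1]" "b0 + b1 - 1"] by (simp add: vrho_single Suc add.commute Fpow_e Fact_bvec)
      also have "\<dots> = (Fact ^^ b1) ((Fact ^^ n) (T (bvec (1, [])) 0))"
        by (simp only: funpow_add o_apply)
      also have "\<dots> = (Fact ^^ b1) (vadd (vsc (q ^ n) (bvec (Suc n, [0])))
        (vsc (qint (int n)) (bvec (n, [1]))))"
        using qvsc_fix[of n "[Suc 0]"] by (simp only: FpowT[OF fs_bvec]) (simp add: Fpow_e T_bvec Fact_bvec)
      finally show ?thesis .
    qed
    define Z1 where "Z1 = vadd (vsc (q ^ (n + 1)) (bvec (Suc n, [0]))) (vsc (qint (int (n + 1))) (bvec (n, [1])))"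
    define Z2 where "Z2 = vadd (vsc (q ^ n) (bvec (Suc n, [0]))) (vsc (qint (int n)) (bvec (n, [1])))"
    have L: "lx (b0, [0]) = vadd (vsc (inverse lam * q ^ b0 - lam * q * qint (int b0)) Z1)
                                 (vsc (lam * q ^ 2 * qint (int b0)) Z2)"
      unfolding Suc W U1 U2 Z1_def Z2_def by (rule ext) (simp add: vadd_def vsc_def algebra_simps)
    show ?thesis unfolding P1 P2 Z1_def[symmetric] Z2_def[symmetric] L
      by (simp add: Fpow_add Fpow_sc Z1_def Z2_def)
  qed
  finally show ?thesis .
qed

lemma part3:
  "xiop (vrho (b0 # b1 # rest)) =
     vadd (vsc (inverse lam * q ^ b0 - lam * q * qint (int b0)) (vrho (0 # (b0 + b1) # rest)))
          (vsc (lam * q ^ 2 * qint (int b0)) (vrho (1 # (b0 + b1 - 1) # rest)))"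
proof (induction rest rule: rev_induct)
  case Nil then show ?case by (rule xi_base)
next
  case (snoc d rest)
  let ?L = "b0 # b1 # rest"
  let ?L1 = "0 # (b0 + b1) # rest"
  let ?L2 = "1 # (b0 + b1 - 1) # rest"
  have ne: "?L \<noteq> []" by simp
  have hb: "hom (length ?L - 1) (vrho ?L)" by (rule hom_vrho[OF ne])
  have hT: "hom (length ?L) (T (vrho ?L) 0)" using hom_T[OF hb, of 0] by simp
  have "xiop (vrho (?L @ [d])) = (Fact ^^ d) (xiop (T (vrho ?L) 0))"
    unfolding vrho_snoc[OF ne] by (rule xi_pow[OF _ hT]) simp_all
  also have "\<dots> = (Fact ^^ d) (T (xiop (vrho ?L)) 0)"
    using xi_T[OF hb] by simp
  also have "\<dots> = vadd (vsc (inverse lam * q ^ b0 - lam * q * qint (int b0)) (vrho (?L1 @ [d])))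
          (vsc (lam * q ^ 2 * qint (int b0)) (vrho (?L2 @ [d])))"
    using snoc.IH vrho_snoc[of ?L1 d] vrho_snoc[of ?L2 d]
    by (simp add: T_vsc T_vadd Fpow_sc Fpow_add)
  finally show ?case by simp
qed

theorem lemma2p4:
  shows "(\<forall>r i bs. 2 \<le> r \<and> 1 \<le> i \<and> i \<le> r - 1 \<and> length bs = r + 1 \<longrightarrow>
            capi i (vrho bs) =
              vsc (- inverse q * qint (int (bs ! i)))
                  (vrho (take (i - 1) bs @ [bs ! (i - 1) + bs ! i + bs ! (i + 1) - 1] @ drop (i + 2) bs)))
       \<and> (\<forall>r i bs. 1 \<le> i \<and> i \<le> r + 1 \<and> length bs = r + 1 \<longrightarrow>
            cupi i (vrho bs) =
              vadd (vadd (vsc (q * qint 2) (vrho (take i bs @ [1, 0] @ drop i bs)))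
                         (vsc (- q) (vrho (take (i - 1) bs @ [bs ! (i - 1) + 1, 0, 0] @ drop i bs))))
                   (vsc (- q) (vrho (take i bs @ [0, 1] @ drop i bs))))
       \<and> (\<forall>r b0 b1 rest. 1 \<le> r \<and> length (b0 # b1 # rest) = r + 1 \<longrightarrow>
            xiop (vrho (b0 # b1 # rest)) =
              vadd (vsc (inverse lam * q ^ b0 - lam * q * qint (int b0)) (vrho (0 # (b0 + b1) # rest)))
                   (vsc (lam * q ^ 2 * qint (int b0)) (vrho (1 # (b0 + b1 - 1) # rest))))"
proof (intro conjI allI impI)
  fix r i and bs :: "nat list"
  assume a: "2 \<le> r \<and> 1 \<le> i \<and> i \<le> r - 1 \<and> length bs = r + 1"
  then have "1 \<le> i" "i + 2 \<le> length bs" by auto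
  then show "capi i (vrho bs) =
              vsc (- inverse q * qint (int (bs ! i)))
                  (vrho (take (i - 1) bs @ [bs ! (i - 1) + bs ! i + bs ! (i + 1) - 1] @ drop (i + 2) bs))"
    using part1 by simp
next
  fix r i and bs :: "nat list"
  assume a: "1 \<le> i \<and> i \<le> r + 1 \<and> length bs = r + 1"
  then have "1 \<le> i" "i \<le> length bs" by auto
  then show "cupi i (vrho bs) =
              vadd (vadd (vsc (q * qint 2) (vrho (take i bs @ [1, 0] @ drop i bs)))
                         (vsc (- q) (vrho (take (i - 1) bs @ [bs ! (i - 1) + 1, 0, 0] @ drop i bs))))
                   (vsc (- q) (vrho (take i bs @ [0, 1] @ drop i bs)))"
    by (rule part2)
next
  fix r b0 b1 rest
  show "xiop (vrho (b0 # b1 # rest)) =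
              vadd (vsc (inverse lam * q ^ b0 - lam * q * qint (int b0)) (vrho (0 # (b0 + b1) # rest)))
                   (vsc (lam * q ^ 2 * qint (int b0)) (vrho (1 # (b0 + b1 - 1) # rest)))"
    by (rule part3)
qed


end
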